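(* Let $b\ge2$ be an integer and let $w=d_1\dots d_p$ be a fixed block of $b$-ary digits with $p\ge1$. Let $u=d_1\dots d_{p-1}$ and $v=d_2\dots d_p$. Then the following identities of formal Laurent series in $t$ hold: $$(1-bt)\,t^{1-p}Z_w(v,0)=1-t^{2-p}Z_w(v,0,u),\qquad (1-bt)\,Z_w(0)=1-t\,Z_w(v,0).$$ Moreover, $Z_w(v,0)(b^{-1})=b$ and $Z_w(v,0,u)(b^{-1})=b^{2-p}$.
   Context: Strings are finite sequences over $\{0,\dots,b-1\}$, including the empty string $\epsilon$. $k_w(X)$ is the number of possibly overlapping occurrences of $w$ in $X$. $Z_w(0)=\sum_l N_w(0,l)t^l$, where $N_w(0,l)$ is the number of strings of length $l$ with $k_w(X)=0$. For strings $x,y$, $Z_w(x,0,y)=\sum_l c_lt^l$, where $c_l$ is the number of strings of length $l$ with $k_w=0$, prefix $x$ and suffix $y$. Also $Z_w(x,0)=Z_w(x,0,\epsilon)$. When $p=1$, $u=v=\epsilon$. *)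

theory Defs
  imports "HOL-Analysis.Analysis" "HOL-Computational_Algebra.Formal_Laurent_Series"
    "HOL-Library.Sublist"
begin

definition is_string :: "nat \<Rightarrow> nat list \<Rightarrow> bool" where
  "is_string b X \<longleftrightarrow> set X \<subseteq> {..<b}"

definition occ :: "nat list \<Rightarrow> nat list \<Rightarrow> nat" where
  "occ w X = card {i. i + length w \<le> length X \<and> take (length w) (drop i X) = w}"

definition cnt :: "nat \<Rightarrow> nat list \<Rightarrow> nat list \<Rightarrow> nat list \<Rightarrow> nat \<Rightarrow> nat" where
  "cnt b w x y l = card {X. is_string b X \<and> length X = l \<and> occ w X = 0
                            \<and> prefix x X \<and> suffix y X}"

definition Zxy :: "nat \<Rightarrow> nat list \<Rightarrow> nat list \<Rightarrow> nat list \<Rightarrow> real fps" where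
  "Zxy b w x y = Abs_fps (\<lambda>l. real (cnt b w x y l))"

definition Zx :: "nat \<Rightarrow> nat list \<Rightarrow> nat list \<Rightarrow> real fps" where
  "Zx b w x = Zxy b w x []"

definition Z0 :: "nat \<Rightarrow> nat list \<Rightarrow> real fps" where
  "Z0 b w = Zxy b w [] []"

end

theory Submission
  imports Defs
begin


definition SS :: "nat \<Rightarrow> nat list \<Rightarrow> nat list \<Rightarrow> nat list \<Rightarrow> nat \<Rightarrow> nat list set" where
  "SS b w x y l = {X. is_string b X \<and> length X = l \<and> \<not> sublist w X \<and> prefix x X \<and> suffix y X}"

lemma occ_eq_0: "occ w X = 0 \<longleftrightarrow> \<not> sublist w X"
proof -
  have fin: "finite {i. i + length w \<le> length X \<and> take (length w) (drop i X) = w}"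
    by (rule finite_subset[of _ "{..length X}"]) auto
  have "(\<exists>i. i + length w \<le> length X \<and> take (length w) (drop i X) = w) \<longleftrightarrow> sublist w X"
  proof
    assume "\<exists>i. i + length w \<le> length X \<and> take (length w) (drop i X) = w"
    then obtain i where i: "i + length w \<le> length X" "take (length w) (drop i X) = w" by blast
    have "X = take i X @ take (length w) (drop i X) @ drop (length w) (drop i X)" by (metis append_take_drop_id)
    then show "sublist w X" using i by (metis sublist_appendI)
  next
    assume "sublist w X"
    then obtain ps ss where "X = ps @ w @ ss" by (auto simp: sublist_def)
    then show "\<exists>i. i + length w \<le> length X \<and> take (length w) (drop i X) = w"
      by (intro exI[of _ "length ps"]) simp
  qed
  then show ?thesis using fin unfolding occ_def by auto
qed

lemma cnt_SS: "cnt b w x y l = card (SS b w x y l)"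
  unfolding cnt_def SS_def occ_eq_0 ..

lemma finite_SS: "finite (SS b w x y l)"
  by (rule finite_subset[OF _ finite_lists_length_eq[of "{..<b}" l]]) (auto simp: SS_def is_string_def)

lemma R1:
  assumes "w \<noteq> []" "is_string b w"
  shows "b * card (SS b w [] [] l) = card (SS b w [] [] (Suc l)) + card (SS b w (drop 1 w) [] l)"
proof -
  let ?f = "\<lambda>(d::nat, Y::nat list). d # Y"
  have inj: "inj_on ?f ({..<b} \<times> SS b w [] [] l)" by (auto simp: inj_on_def)
  have hw: "w = hd w # drop 1 w" using assms(1) by (cases w) auto
  have hb: "hd w < b" using assms by (cases w) (auto simp: is_string_def)
  have img: "?f ` ({..<b} \<times> SS b w [] [] l) = SS b w [] [] (Suc l) \<union> Cons (hd w) ` SS b w (drop 1 w) [] l"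
  proof (intro equalityI subsetI)
    fix Z assume "Z \<in> ?f ` ({..<b} \<times> SS b w [] [] l)"
    then obtain d Y where Z: "Z = d # Y" "d < b" "Y \<in> SS b w [] [] l" by auto
    show "Z \<in> SS b w [] [] (Suc l) \<union> Cons (hd w) ` SS b w (drop 1 w) [] l"
    proof (cases "sublist w Z")
      case True
      then have "prefix w (d # Y)" using Z by (auto simp: sublist_Cons_right SS_def)
      then have "d = hd w" "prefix (drop 1 w) Y" using hw by (metis Cons_prefix_Cons)+
      then show ?thesis using Z by (auto simp: SS_def)
    next
      case False
      then show ?thesis using Z by (auto simp: SS_def is_string_def)
    qed
  next
    fix Z assume "Z \<in> SS b w [] [] (Suc l) \<union> Cons (hd w) ` SS b w (drop 1 w) [] l"
    then show "Z \<in> ?f ` ({..<b} \<times> SS b w [] [] l)"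
    proof
      assume Z: "Z \<in> SS b w [] [] (Suc l)"
      then obtain d Y where "Z = d # Y" by (cases Z) (simp_all add: SS_def)
      have "d < b" "is_string b Y" "length Y = l" using Z \<open>Z = d # Y\<close> by (auto simp: SS_def is_string_def)
      moreover have "\<not> sublist w Y" using Z \<open>Z = d # Y\<close> by (auto simp: SS_def sublist_Cons_right)
      ultimately have "(d, Y) \<in> {..<b} \<times> SS b w [] [] l" by (simp add: SS_def)
      then show ?thesis using \<open>Z = d # Y\<close> by (intro rev_image_eqI[of "(d,Y)"]) simp_all
    next
      assume "Z \<in> Cons (hd w) ` SS b w (drop 1 w) [] l"
      then obtain Y where "Z = hd w # Y" "Y \<in> SS b w (drop 1 w) [] l" by auto
      then have "(hd w, Y) \<in> {..<b} \<times> SS b w [] [] l" using hb by (simp add: SS_def)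
      then show ?thesis using \<open>Z = hd w # Y\<close> by (intro rev_image_eqI[of "(hd w,Y)"]) simp_all
    qed
  qed
  have disj: "SS b w [] [] (Suc l) \<inter> Cons (hd w) ` SS b w (drop 1 w) [] l = {}"
  proof -
    { fix Y assume "Y \<in> SS b w (drop 1 w) [] l"
      then have "prefix (hd w # drop 1 w) (hd w # Y)" by (simp add: SS_def)
      then have "prefix w (hd w # Y)" using assms(1) by (cases w) simp_all
      then have "sublist w (hd w # Y)" by (rule prefix_imp_sublist) }
    then show ?thesis by (force simp: SS_def)
  qed
  have "b * card (SS b w [] [] l) = card ({..<b} \<times> SS b w [] [] l)" by (simp add: card_cartesian_product)
  also have "\<dots> = card (?f ` ({..<b} \<times> SS b w [] [] l))" using inj by (simp add: card_image)
  also have "\<dots> = card (SS b w [] [] (Suc l)) + card (Cons (hd w) ` SS b w (drop 1 w) [] l)"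
    unfolding img by (rule card_Un_disjoint[OF finite_SS _ disj]) (auto intro: finite_SS)
  also have "card (Cons (hd w) ` SS b w (drop 1 w) [] l) = card (SS b w (drop 1 w) [] l)"
    by (simp add: card_image)
  finally show ?thesis .
qed


lemma R2:
  assumes "w \<noteq> []" "is_string b w" "length (drop 1 w) \<le> l"
  shows "b * card (SS b w (drop 1 w) [] l) = card (SS b w (drop 1 w) [] (Suc l))
           + card (SS b w (drop 1 w) (take (length w - 1) w) l)"
proof -
  define v where "v = drop 1 w"
  define u where "u = take (length w - 1) w"
  let ?f = "\<lambda>(Y::nat list, d::nat). Y @ [d]"
  have inj: "inj_on ?f (SS b w v [] l \<times> {..<b})" by (auto simp: inj_on_def)
  have hw: "w = u @ [last w]" using assms(1) unfolding u_def
    by (metis append_butlast_last_id butlast_conv_take)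
  have "last w \<in> set w" using assms(1) by simp
  then have hb: "last w < b" using assms(2) by (auto simp: is_string_def)
  have lv: "length v \<le> l" using assms(3) v_def by simp
  have img: "?f ` (SS b w v [] l \<times> {..<b}) = SS b w v [] (Suc l) \<union> (\<lambda>Y. Y @ [last w]) ` SS b w v u l"
  proof (intro equalityI subsetI)
    fix Z assume "Z \<in> ?f ` (SS b w v [] l \<times> {..<b})"
    then obtain d Y where Z: "Z = Y @ [d]" "d < b" "Y \<in> SS b w v [] l" by auto
    show "Z \<in> SS b w v [] (Suc l) \<union> (\<lambda>Y. Y @ [last w]) ` SS b w v u l"
    proof (cases "sublist w Z")
      case True
      then have "suffix w (Y @ [d])" using Z by (auto simp: sublist_snoc SS_def)
      then have "suffix (u @ [last w]) (Y @ [d])" using hw by simp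
      then have "d = last w" "suffix u Y" by simp_all
      then have "Y \<in> SS b w v u l" using Z by (simp add: SS_def)
      then show ?thesis using Z \<open>d = last w\<close> by blast
    next
      case False
      have "is_string b Z" using Z by (auto simp: SS_def is_string_def)
      moreover have "prefix v Z" using Z by (auto simp: SS_def intro: prefix_order.trans)
      ultimately have "Z \<in> SS b w v [] (Suc l)" using False Z by (simp add: SS_def)
      then show ?thesis by blast
    qed
  next
    fix Z assume "Z \<in> SS b w v [] (Suc l) \<union> (\<lambda>Y. Y @ [last w]) ` SS b w v u l"
    then show "Z \<in> ?f ` (SS b w v [] l \<times> {..<b})"
    proof
      assume Z: "Z \<in> SS b w v [] (Suc l)"
      then have "Z \<noteq> []" by (auto simp: SS_def)
      then obtain d Y where ZY: "Z = Y @ [d]" by (metis append_butlast_last_id)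
      have "d < b" "is_string b Y" "length Y = l" using Z ZY by (auto simp: SS_def is_string_def)
      moreover have "\<not> sublist w Y" using Z ZY by (auto simp: SS_def sublist_snoc)
      moreover have "prefix v Y"
      proof -
        have "prefix v (Y @ [d])" using Z ZY by (simp add: SS_def)
        then have "v = Y @ [d] \<or> prefix v Y" by simp
        then show ?thesis using lv \<open>length Y = l\<close> by auto
      qed
      ultimately have "(Y, d) \<in> SS b w v [] l \<times> {..<b}" by (simp add: SS_def)
      then show ?thesis using ZY by (intro rev_image_eqI[of "(Y,d)"]) simp_all
    next
      assume "Z \<in> (\<lambda>Y. Y @ [last w]) ` SS b w v u l"
      then obtain Y where "Z = Y @ [last w]" "Y \<in> SS b w v u l" by auto
      then have "(Y, last w) \<in> SS b w v [] l \<times> {..<b}" using hb by (simp add: SS_def)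
      then show ?thesis using \<open>Z = Y @ [last w]\<close> by (intro rev_image_eqI[of "(Y, last w)"]) simp_all
    qed
  qed
  have disj: "SS b w v [] (Suc l) \<inter> (\<lambda>Y. Y @ [last w]) ` SS b w v u l = {}"
  proof -
    { fix Y assume "Y \<in> SS b w v u l"
      then have "suffix (u @ [last w]) (Y @ [last w])" by (simp add: SS_def)
      then have "suffix w (Y @ [last w])" using hw by simp
      then have "sublist w (Y @ [last w])" by (rule suffix_imp_sublist) }
    then show ?thesis by (force simp: SS_def)
  qed
  have "b * card (SS b w v [] l) = card (SS b w v [] l \<times> {..<b})" by (simp add: card_cartesian_product)
  also have "\<dots> = card (?f ` (SS b w v [] l \<times> {..<b}))" using inj by (simp add: card_image)
  also have "\<dots> = card (SS b w v [] (Suc l)) + card ((\<lambda>Y. Y @ [last w]) ` SS b w v u l)"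
    unfolding img by (rule card_Un_disjoint[OF finite_SS _ disj]) (auto intro: finite_SS)
  also have "card ((\<lambda>Y. Y @ [last w]) ` SS b w v u l) = card (SS b w v u l)"
    by (simp add: card_image inj_on_def)
  finally show ?thesis unfolding v_def u_def .
qed

lemma SS_short: "l < length x \<Longrightarrow> SS b w x y l = {}"
  by (auto simp: SS_def dest: prefix_length_le)

lemma SS_exact:
  assumes "w \<noteq> []" "is_string b w"
  shows "SS b w (drop 1 w) [] (length w - 1) = {drop 1 w}"
proof -
  have "\<not> sublist w (drop 1 w)"
  proof
    assume "sublist w (drop 1 w)"
    then have "length w \<le> length (drop 1 w)" by (rule sublist_length_le)
    with assms(1) show False by (cases w) simp_all
  qed
  moreover have "is_string b (drop 1 w)" using assms(2) by (auto simp: is_string_def dest: in_set_dropD)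
  ultimately show ?thesis
    by (auto simp: SS_def prefix_def)
qed


lemma block:
  assumes "is_string b w"
  shows "card (SS b w [] [] (n + length w)) \<le> (b ^ length w - 1) * card (SS b w [] [] n)"
proof -
  define T where "T = {Y. set Y \<subseteq> {..<b} \<and> length Y = length w} - {w}"
  have finT: "finite T" unfolding T_def by (rule finite_Diff) (rule finite_lists_length_eq, simp)
  have "card T = b ^ length w - 1" unfolding T_def
    using assms by (subst card_Diff_singleton) (auto simp: card_lists_length_eq is_string_def)
  let ?f = "\<lambda>Z::nat list. (take n Z, drop n Z)"
  have inj: "inj_on ?f (SS b w [] [] (n + length w))"
    by (rule inj_onI) (metis append_take_drop_id prod.inject)
  have sub: "?f ` SS b w [] [] (n + length w) \<subseteq> SS b w [] [] n \<times> T"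
  proof
    fix P assume "P \<in> ?f ` SS b w [] [] (n + length w)"
    then obtain Z where Z: "Z \<in> SS b w [] [] (n + length w)" "P = ?f Z" by blast
    have st: "set Z \<subseteq> {..<b}" "length Z = n + length w" "\<not> sublist w Z" using Z by (auto simp: SS_def is_string_def)
    have "set (take n Z) \<subseteq> {..<b}" "set (drop n Z) \<subseteq> {..<b}"
      using st(1) by (auto dest: in_set_takeD in_set_dropD)
    moreover have "\<not> sublist w (take n Z)"
      using st(3) by (metis append_take_drop_id sublist_append_leftI sublist_order.dual_order.trans sublist_append_rightI)
    moreover have "drop n Z \<noteq> w"
      using st(3) by (metis append_take_drop_id sublist_append_leftI)
    ultimately show "P \<in> SS b w [] [] n \<times> T" using Z(2) st(2)
      by (simp add: SS_def T_def is_string_def)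
  qed
  have "card (SS b w [] [] (n + length w)) \<le> card (SS b w [] [] n \<times> T)"
    by (rule card_inj_on_le[OF inj sub]) (simp add: finite_SS finT)
  also have "\<dots> = (b ^ length w - 1) * card (SS b w [] [] n)"
    by (simp add: card_cartesian_product \<open>card T = _\<close>)
  finally show ?thesis .
qed



theorem lemma5:
  fixes b :: nat and w :: "nat list"
  assumes "b \<ge> 2" and "w \<noteq> []" and "is_string b w"
  defines "p \<equiv> length w"
  defines "u \<equiv> take (p - 1) w"
  defines "v \<equiv> drop 1 w"
  defines "t \<equiv> (fls_X :: real fls)"
  shows "(1 - of_nat b * t) * fls_X_intpow (1 - int p) * fps_to_fls (Zx b w v)
           = 1 - fls_X_intpow (2 - int p) * fps_to_fls (Zxy b w v u)
         \<and> (1 - of_nat b * t) * fps_to_fls (Z0 b w) = 1 - t * fps_to_fls (Zx b w v)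
         \<and> (\<lambda>l. fps_nth (Zx b w v) l * (1 / real b) ^ l) sums (real b)
         \<and> (\<lambda>l. fps_nth (Zxy b w v u) l * (1 / real b) ^ l) sums (real b powi (2 - int p))"
proof -
  define N where "N l = real (card (SS b w [] [] l))" for l
  define A where "A l = real (card (SS b w v [] l))" for l
  define C where "C l = real (card (SS b w v u l))" for l
  have p1: "p \<ge> 1" using assms(2) p_def by (cases w) auto
  have lv: "length v = p - 1" unfolding v_def p_def by simp
  have nA: "fps_nth (Zx b w v) l = A l" for l by (simp add: Zx_def Zxy_def A_def cnt_SS)
  have nC: "fps_nth (Zxy b w v u) l = C l" for l by (simp add: Zxy_def C_def cnt_SS)
  have nN: "fps_nth (Z0 b w) l = N l" for l by (simp add: Z0_def Zxy_def N_def cnt_SS)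
  have N0: "N 0 = 1"
  proof -
    have "SS b w [] [] 0 = {[]}" using assms(2) by (auto simp: SS_def is_string_def)
    then show ?thesis by (simp add: N_def)
  qed
  have R1r: "real b * N l = N (Suc l) + A l" for l
  proof -
    have "real (b * card (SS b w [] [] l)) = real (card (SS b w [] [] (Suc l)) + card (SS b w v [] l))"
      using R1[OF assms(2,3), of l] unfolding v_def by simp
    then show ?thesis unfolding N_def A_def by simp
  qed
  have R2r: "real b * A l + (if Suc l = p - 1 then 1 else 0) = A (Suc l) + C l" for l
  proof (cases "p - 1 \<le> l")
    case True
    have "b * card (SS b w v [] l) = card (SS b w v [] (Suc l)) + card (SS b w v u l)"
      using R2[OF assms(2,3), of l] True unfolding v_def u_def p_def by simp
    then have "real (b * card (SS b w v [] l)) = real (card (SS b w v [] (Suc l)) + card (SS b w v u l))"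
      by simp
    moreover have "Suc l \<noteq> p - 1" using True by simp
    ultimately show ?thesis unfolding A_def C_def by simp
  next
    case False
    have "A l = 0" "C l = 0" using False lv SS_short[of l v] unfolding A_def C_def by auto
    moreover have "A (Suc l) = (if Suc l = p - 1 then 1 else 0)"
    proof (cases "Suc l = p - 1")
      case True
      then show ?thesis using SS_exact[OF assms(2,3)] unfolding A_def v_def p_def by simp
    next
      case False
      then have "Suc l < length v" using \<open>\<not> p - 1 \<le> l\<close> lv by simp
      then show ?thesis using False SS_short[of "Suc l" v] unfolding A_def by simp
    qed
    ultimately show ?thesis by simp
  qed
  have A0: "A 0 = (if p = 1 then 1 else 0)"
  proof (cases "p = 1")
    case True
    then show ?thesis using SS_exact[OF assms(2,3)] unfolding A_def v_def p_def by simp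
  next
    case False
    then have "0 < length v" using lv p1 by simp
    then show ?thesis using False SS_short[of 0 v] unfolding A_def by simp
  qed
  have F1: "(1 - of_nat b * fps_X) * Zx b w v = fps_X ^ (p - 1) - fps_X * Zxy b w v u"
  proof (rule fps_ext)
    fix n
    have e: "(1 - of_nat b * fps_X) * Zx b w v = Zx b w v - fps_const (real b) * (fps_X * Zx b w v)"
      by (simp add: algebra_simps fps_of_nat)
    show "fps_nth ((1 - of_nat b * fps_X) * Zx b w v) n = fps_nth (fps_X ^ (p - 1) - fps_X * Zxy b w v u) n"
    proof (cases n)
      case 0
      then show ?thesis unfolding e using A0 p1 by (simp add: nA fps_mult_left_const_nth fps_X_power_nth)
    next
      case (Suc m)
      then show ?thesis unfolding e using R2r[of m] p1
        by (simp add: nA nC fps_mult_left_const_nth fps_X_power_nth fps_X_mult_nth algebra_simps)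
    qed
  qed
  have F2: "(1 - of_nat b * fps_X) * Z0 b w = 1 - fps_X * Zx b w v"
  proof (rule fps_ext)
    fix n
    have e: "(1 - of_nat b * fps_X) * Z0 b w = Z0 b w - fps_const (real b) * (fps_X * Z0 b w)"
      by (simp add: algebra_simps fps_of_nat)
    show "fps_nth ((1 - of_nat b * fps_X) * Z0 b w) n = fps_nth (1 - fps_X * Zx b w v) n"
    proof (cases n)
      case 0
      then show ?thesis unfolding e using N0 by (simp add: nN fps_mult_left_const_nth)
    next
      case (Suc m)
      then show ?thesis unfolding e using R1r[of m]
        by (simp add: nA nN fps_mult_left_const_nth fps_X_mult_nth algebra_simps)
    qed
  qed
  let ?fA = "fps_to_fls (Zx b w v)" and ?fC = "fps_to_fls (Zxy b w v u)" and ?fN = "fps_to_fls (Z0 b w)"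
  have G1: "(1 - of_nat b * fls_X) * ?fA = fls_X ^ (p - 1) - fls_X * ?fC"
    using arg_cong[OF F1, of fps_to_fls]
    by (simp add: fls_times_fps_to_fls fps_to_fls_power)
  have G2: "(1 - of_nat b * fls_X) * ?fN = 1 - fls_X * ?fA"
    using arg_cong[OF F2, of fps_to_fls]
    by (simp add: fls_times_fps_to_fls fps_to_fls_power)
  have K1: "fls_X_intpow (1 - int p) * (fls_X ^ (p - 1) :: real fls) = 1"
  proof -
    have "(fls_X ^ (p - 1) :: real fls) = fls_X_intpow (int p - 1)"
      using p1 by (simp add: fls_X_power_conv_shift_1 of_nat_diff)
    moreover have "fls_X_intpow (1 - int p) * fls_X_intpow (int p - 1) = (fls_X_intpow 0 :: real fls)"
      by (subst fls_X_intpow_times_fls_X_intpow) simp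
    ultimately show ?thesis by simp
  qed
  have K2: "fls_X_intpow (1 - int p) * (fls_X :: real fls) = fls_X_intpow (2 - int p)"
    unfolding fls_X_conv_shift_1 by (subst fls_X_intpow_times_fls_X_intpow) simp
  have goal1: "(1 - of_nat b * t) * fls_X_intpow (1 - int p) * ?fA = 1 - fls_X_intpow (2 - int p) * ?fC"
  proof -
    have "(1 - of_nat b * t) * fls_X_intpow (1 - int p) * ?fA = fls_X_intpow (1 - int p) * ((1 - of_nat b * fls_X) * ?fA)"
      unfolding t_def by (simp add: algebra_simps)
    also have "\<dots> = fls_X_intpow (1 - int p) * fls_X ^ (p - 1) - (fls_X_intpow (1 - int p) * fls_X) * ?fC"
      unfolding G1 by (simp add: algebra_simps)
    also have "\<dots> = 1 - fls_X_intpow (2 - int p) * ?fC" unfolding K1 K2 ..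
    finally show ?thesis .
  qed
  have goal2: "(1 - of_nat b * t) * ?fN = 1 - t * ?fA" using G2 unfolding t_def .
  define r where "r = 1 / real b"
  have bpos: "real b > 0" using assms(1) by simp
  have rb: "real b * r = 1" unfolding r_def using bpos by simp
  have r0: "r > 0" unfolding r_def using bpos by simp
  have Nge: "N n \<ge> 0" "A n \<ge> 0" "C n \<ge> 0" for n unfolding N_def A_def C_def by simp_all
  define a where "a n = N n * r ^ n" for n
  have age: "a n \<ge> 0" for n unfolding a_def using Nge r0 by simp
  have PA: "(\<Sum>l<n. A l * r ^ l) = real b * (1 - a n)" for n
  proof (induction n)
    case 0
    then show ?case using N0 by (simp add: a_def)
  next
    case (Suc n)
    have f1: "(\<Sum>l<Suc n. A l * r ^ l) = (\<Sum>l<n. A l * r ^ l) + A n * r ^ n" by simp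
    have f2: "(\<Sum>l<n. A l * r ^ l) = real b - real b * (N n * r ^ n)"
      using Suc by (simp add: a_def right_diff_distrib)
    have f3: "A n * r ^ n = real b * (N n * r ^ n) - N (Suc n) * r ^ n"
    proof -
      have "A n = real b * N n - N (Suc n)" using R1r[of n] by linarith
      then show ?thesis by (simp add: left_diff_distrib mult.assoc)
    qed
    have f4: "N (Suc n) * r ^ n = real b * (N (Suc n) * r ^ Suc n)"
    proof -
      have "real b * (N (Suc n) * r ^ Suc n) = N (Suc n) * r ^ n * (real b * r)"
        by (simp add: power_Suc algebra_simps)
      then show ?thesis using rb by simp
    qed
    have "(\<Sum>l<Suc n. A l * r ^ l) = real b - real b * (N (Suc n) * r ^ Suc n)"
      using f1 f2 f3 f4 by linarith
    then show ?case by (simp add: a_def right_diff_distrib)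
  qed
  have adec: "a (Suc n) \<le> a n" for n
  proof -
    have "N (Suc n) \<le> real b * N n" using R1r[of n] Nge(2)[of n] by simp
    then have "N (Suc n) * r ^ Suc n \<le> real b * N n * r ^ Suc n"
      by (rule mult_right_mono) (use r0 in simp)
    also have "\<dots> = N n * r ^ n" using rb by (simp add: power_Suc algebra_simps)
    finally show ?thesis by (simp add: a_def)
  qed
  define q where "q = 1 - r ^ p"
  have q1: "q < 1" unfolding q_def using r0 by simp
  have ablock: "a (n + p) \<le> q * a n" for n
  proof -
    have bp: "b ^ p \<ge> 1" using assms(1) by simp
    have "card (SS b w [] [] (n + p)) \<le> (b ^ p - 1) * card (SS b w [] [] n)"
      using block[OF assms(3), of n] unfolding p_def .
    then have "real (card (SS b w [] [] (n + p))) \<le> real ((b ^ p - 1) * card (SS b w [] [] n))"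
      by (rule of_nat_mono)
    also have "real ((b ^ p - 1) * card (SS b w [] [] n)) = (real b ^ p - 1) * N n"
      unfolding N_def using bp by (simp add: of_nat_diff)
    finally have "N (n + p) \<le> (real b ^ p - 1) * N n" unfolding N_def .
    then have "N (n + p) * r ^ (n + p) \<le> (real b ^ p - 1) * N n * r ^ (n + p)"
      by (rule mult_right_mono) (use r0 in simp)
    also have "\<dots> = (real b ^ p - 1) * r ^ p * (N n * r ^ n)" by (simp add: power_add algebra_simps)
    also have "(real b ^ p - 1) * r ^ p = q"
      unfolding q_def using rb by (simp add: algebra_simps power_mult_distrib[symmetric])
    finally show ?thesis by (simp add: a_def)
  qed
  have alim: "a \<longlonglongrightarrow> 0"
  proof -
    have "decseq a" by (rule decseq_SucI) (rule adec)
    then obtain L where L: "a \<longlonglongrightarrow> L" "\<forall>i. L \<le> a i"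
      using age by (auto intro: decseq_convergent[of a 0])
    have L0: "L \<ge> 0" using L(1) age by (intro LIMSEQ_le_const) auto
    have "(\<lambda>n. a (n + p)) \<longlonglongrightarrow> L" using L(1) by (rule LIMSEQ_ignore_initial_segment)
    moreover have "(\<lambda>n. q * a n) \<longlonglongrightarrow> q * L" using L(1) by (intro tendsto_intros)
    ultimately have "L \<le> q * L" by (rule LIMSEQ_le) (use ablock in auto)
    then have "(1 - q) * L \<le> 0" by (simp add: algebra_simps)
    moreover have "1 - q > 0" using q1 by simp
    ultimately have "L \<le> 0" by (simp add: mult_le_0_iff)
    then have "L = 0" using L0 by simp
    then show ?thesis using L(1) by simp
  qed
  have Ale: "A n \<le> N n" for n
  proof -
    have "SS b w v [] n \<subseteq> SS b w [] [] n" by (auto simp: SS_def)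
    then show ?thesis unfolding A_def N_def by (simp add: card_mono finite_SS)
  qed
  have Alim: "(\<lambda>n. A n * r ^ n) \<longlonglongrightarrow> 0"
  proof (rule tendsto_sandwich[of "\<lambda>_. 0" _ _ a])
    show "\<forall>\<^sub>F n in sequentially. 0 \<le> A n * r ^ n" using Nge r0 by simp
    show "\<forall>\<^sub>F n in sequentially. A n * r ^ n \<le> a n" unfolding a_def
      by (intro always_eventually allI mult_right_mono Ale) (use r0 in simp)
  qed (simp_all add: alim)
  have S1: "(\<lambda>l. fps_nth (Zx b w v) l * (1 / real b) ^ l) sums (real b)"
  proof -
    have "(\<lambda>n. real b * (1 - a n)) \<longlonglongrightarrow> real b * (1 - 0)" by (intro tendsto_intros alim)
    then show ?thesis unfolding sums_def nA r_def[symmetric] PA by simp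
  qed
  define K where "K = real b * A 0 + (if 2 \<le> p then r ^ (p - 2) else 0)"
  have PC: "(\<Sum>l<n. C l * r ^ l) = real b * A 0 + (if 2 \<le> p \<and> p - 2 < n then r ^ (p - 2) else 0) - real b * (A n * r ^ n)" for n
  proof (induction n)
    case 0
    then show ?case by simp
  next
    case (Suc n)
    have f1: "(\<Sum>l<Suc n. C l * r ^ l) = (\<Sum>l<n. C l * r ^ l) + C n * r ^ n" by simp
    have f3: "C n * r ^ n = real b * (A n * r ^ n) + (if Suc n = p - 1 then 1 else 0) * r ^ n - A (Suc n) * r ^ n"
    proof -
      have "C n = real b * A n + (if Suc n = p - 1 then 1 else 0) - A (Suc n)" using R2r[of n] by linarith
      then show ?thesis by (simp only: left_diff_distrib distrib_right mult.assoc)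
    qed
    have f4: "A (Suc n) * r ^ n = real b * (A (Suc n) * r ^ Suc n)"
    proof -
      have "real b * (A (Suc n) * r ^ Suc n) = A (Suc n) * r ^ n * (real b * r)"
        by (simp add: power_Suc algebra_simps)
      then show ?thesis using rb by simp
    qed
    have e3: "(if 2 \<le> p \<and> p - 2 < n then r ^ (p - 2) else 0) + (if Suc n = p - 1 then 1 else 0) * r ^ n
        = (if 2 \<le> p \<and> p - 2 < Suc n then r ^ (p - 2) else 0)"
    proof (cases "Suc n = p - 1")
      case True
      then have "n = p - 2" "2 \<le> p" by simp_all
      then show ?thesis using True by simp
    qed auto
    show ?case using Suc f1 f3 f4 e3 by linarith
  qed
  have S2: "(\<lambda>l. fps_nth (Zxy b w v u) l * (1 / real b) ^ l) sums (real b powi (2 - int p))"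
  proof -
    have "(\<lambda>n. K - real b * (A n * r ^ n)) \<longlonglongrightarrow> K - real b * 0" by (intro tendsto_intros Alim)
    then have lim1: "(\<lambda>n. K - real b * (A n * r ^ n)) \<longlonglongrightarrow> K" by simp
    have ev: "\<forall>\<^sub>F n in sequentially. K - real b * (A n * r ^ n) = (\<Sum>l<n. C l * r ^ l)"
    proof (rule eventually_sequentiallyI[of p])
      fix n assume "p \<le> n"
      then have "(2 \<le> p \<and> p - 2 < n) = (2 \<le> p)" by auto
      then show "K - real b * (A n * r ^ n) = (\<Sum>l<n. C l * r ^ l)" unfolding PC K_def by simp
    qed
    have "(\<lambda>n. \<Sum>l<n. C l * r ^ l) \<longlonglongrightarrow> K" by (rule Lim_transform_eventually[OF lim1 ev])
    moreover have "K = real b powi (2 - int p)"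
    proof (cases "p = 1")
      case True
      then show ?thesis using A0 by (simp add: K_def)
    next
      case False
      then have p2: "2 \<le> p" using p1 by simp
      then have "2 - int p = - int (p - 2)" by simp
      then have "real b powi (2 - int p) = inverse (real b ^ (p - 2))"
        by (simp only: power_int_minus power_int_of_nat)
      moreover have "K = r ^ (p - 2)" using A0 p2 False by (simp add: K_def)
      moreover have "r ^ (p - 2) = inverse (real b ^ (p - 2))" unfolding r_def
        by (simp add: power_one_over inverse_eq_divide)
      ultimately show ?thesis by simp
    qed
    ultimately show ?thesis unfolding sums_def nC r_def[symmetric] by simp
  qed
  show ?thesis using goal1 goal2 S1 S2 by blast
qed

end
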